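(* Let $n\ge 5$. If $x\in\mathrm{Sort}_n(123,321)$, then $\mathrm{ind}_{s_{123,321}(x)}(2)=\mathrm{ind}_{s_{123,321}(x)}(1)-1$, i.e. $2$ immediately precedes $1$ in $s_{123,321}(x)$.
   Context: $\mathrm{ind}_y(a)$ is the position of the value $a$ in $y$. A permutation contains a pattern $p$ if it has a subsequence order-isomorphic to $p$; otherwise it avoids $p$. For a set $T$ of patterns, the map $s_T$ is defined as follows: the entries of the input permutation are read from left to right, with an initially empty stack. At each step, if the input is nonempty and pushing the next input entry onto the stack produces a stack whose contents, read from top to bottom, avoid every pattern in $T$, that entry is pushed; otherwise the top entry of the stack is popped and appended to the output. When the input is exhausted, the remaining stack entries are popped one at a time to the output. Write $s_{\sigma,\tau}=s_{\{\sigma,\tau\}}$ and $s=s_{\{21\}}$ (West's stack-sorting map). $\mathrm{Sort}_n(\sigma,\tau)$ is the set of $x\in S_n$ with $s(s_{\sigma,\tau}(x))=12\cdots n$. *)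

theory Defs
  imports Main
begin

definition is_perm :: "nat \<Rightarrow> nat list \<Rightarrow> bool" where
  "is_perm n x \<longleftrightarrow> distinct x \<and> set x = {1..n}"

definition order_iso :: "nat list \<Rightarrow> nat list \<Rightarrow> bool" where
  "order_iso u p \<longleftrightarrow> length u = length p \<and>
     (\<forall>i < length u. \<forall>j < length u. (u ! i < u ! j \<longleftrightarrow> p ! i < p ! j))"

definition contains :: "nat list \<Rightarrow> nat list \<Rightarrow> bool" where
  "contains w p \<longleftrightarrow> (\<exists>u \<in> set (subseqs w). order_iso u p)"

definition avoids_all :: "nat list set \<Rightarrow> nat list \<Rightarrow> bool" where
  "avoids_all T w \<longleftrightarrow> (\<forall>p \<in> T. \<not> contains w p)"

text \<open>Arguments: pattern set, remaining input,
  stack (head = top of stack), output so far. If the stack is empty, the entry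
  is always pushed (this case never arises when every pattern has length at least 2).\<close>
fun stack_run :: "nat list set \<Rightarrow> nat list \<Rightarrow> nat list \<Rightarrow> nat list \<Rightarrow> nat list" where
  "stack_run T [] stk out = out @ stk"
| "stack_run T (a # inp) [] out = stack_run T inp [a] out"
| "stack_run T (a # inp) (b # stk) out =
     (if avoids_all T (a # b # stk) then stack_run T inp (a # b # stk) out
      else stack_run T (a # inp) stk (out @ [b]))"

definition sT :: "nat list set \<Rightarrow> nat list \<Rightarrow> nat list" where
  "sT T x = stack_run T x [] []"

definition s2 :: "nat list \<Rightarrow> nat list \<Rightarrow> nat list \<Rightarrow> nat list" where
  "s2 \<sigma> \<tau> = sT {\<sigma>, \<tau>}"

definition west :: "nat list \<Rightarrow> nat list" where
  "west = sT {[2,1]}"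

definition Sort :: "nat \<Rightarrow> nat list \<Rightarrow> nat list \<Rightarrow> nat list set" where
  "Sort n \<sigma> \<tau> = {x. is_perm n x \<and> west (s2 \<sigma> \<tau> x) = [1..<n+1]}"

text \<open>Position of value a in y (0-based; only differences are used).\<close>
definition ind :: "nat list \<Rightarrow> nat \<Rightarrow> nat" where
  "ind y a = (THE i. i < length y \<and> y ! i = a)"

end

theory Submission
  imports Defs "HOL-Library.Multiset"
begin


definition T3 :: "nat list set" where "T3 = {[1,2,3],[3,2,1]}"

lemma len3: "length u = 3 \<Longrightarrow> \<exists>p q r. u = [p,q,r]"
  by (simp add: numeral_eq_Suc length_Suc_conv) blast
lemma len2: "length u = 2 \<Longrightarrow> \<exists>p q. u = [p,q]"
  by (simp add: numeral_eq_Suc length_Suc_conv) blast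

lemma oi123: "order_iso u [1,2,3] \<longleftrightarrow> (\<exists>p q r. u=[p,q,r] \<and> p<q \<and> q<r)"
proof
  assume h: "order_iso u [1,2,3]"
  then have "length u = 3" by (simp add: order_iso_def)
  then obtain p q r where u: "u = [p,q,r]" using len3 by blast
  show "\<exists>p q r. u=[p,q,r] \<and> p<q \<and> q<r" using h unfolding u order_iso_def
    by (simp add: All_less_Suc2 numeral_eq_Suc)
next
  assume "\<exists>p q r. u=[p,q,r] \<and> p<q \<and> q<r"
  then show "order_iso u [1,2,3]" unfolding order_iso_def
    apply clarify
    by (simp add: All_less_Suc2 numeral_eq_Suc)
qed

lemma oi321: "order_iso u [3,2,1] \<longleftrightarrow> (\<exists>p q r. u=[p,q,r] \<and> p>q \<and> q>r)"
proof
  assume h: "order_iso u [3,2,1]"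
  then have "length u = 3" by (simp add: order_iso_def)
  then obtain p q r where u: "u = [p,q,r]" using len3 by blast
  show "\<exists>p q r. u=[p,q,r] \<and> p>q \<and> q>r" using h unfolding u order_iso_def
    by (simp add: All_less_Suc2 numeral_eq_Suc)
next
  assume "\<exists>p q r. u=[p,q,r] \<and> p>q \<and> q>r"
  then show "order_iso u [3,2,1]" unfolding order_iso_def
    apply clarify
    by (simp add: All_less_Suc2 numeral_eq_Suc)
qed

lemma oi21: "order_iso u [2,1] \<longleftrightarrow> (\<exists>p q. u=[p,q] \<and> p>q)"
proof
  assume h: "order_iso u [2,1]"
  then have "length u = 2" by (simp add: order_iso_def)
  then obtain p q where u: "u = [p,q]" using len2 by blast
  show "\<exists>p q. u=[p,q] \<and> p>q" using h unfolding u order_iso_def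
    by (simp add: All_less_Suc2 numeral_eq_Suc)
next
  assume "\<exists>p q. u=[p,q] \<and> p>q"
  then show "order_iso u [2,1]" unfolding order_iso_def
    apply clarify
    by (simp add: All_less_Suc2 numeral_eq_Suc)
qed

lemma av3: "avoids_all T3 w \<longleftrightarrow>
  \<not> (\<exists>u\<in>set (subseqs w). \<exists>p q r. u=[p,q,r] \<and> p<q \<and> q<r) \<and>
  \<not> (\<exists>u\<in>set (subseqs w). \<exists>p q r. u=[p,q,r] \<and> p>q \<and> q>r)"
proof -
  have 1: "avoids_all T3 w = (\<not> contains w [1,2,3] \<and> \<not> contains w [3,2,1])"
    by (simp add: avoids_all_def T3_def)
  have 2: "contains w [1,2,3] = (\<exists>u\<in>set (subseqs w). \<exists>p q r. u=[p,q,r] \<and> p<q \<and> q<r)"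
    by (simp only: contains_def oi123)
  have 3: "contains w [3,2,1] = (\<exists>u\<in>set (subseqs w). \<exists>p q r. u=[p,q,r] \<and> p>q \<and> q>r)"
    by (simp only: contains_def oi321)
  show ?thesis by (simp only: 1 2 3)
qed

lemma av21: "avoids_all {[2,1]} w \<longleftrightarrow> \<not> (\<exists>u\<in>set (subseqs w). \<exists>p q. u=[p,q] \<and> p>q)"
proof -
  have 1: "avoids_all {[2,1]} w = (\<not> contains w [2,1])"
    by (simp add: avoids_all_def)
  have 2: "contains w [2,1] = (\<exists>u\<in>set (subseqs w). \<exists>p q. u=[p,q] \<and> p>q)"
    by (simp only: contains_def oi21)
  show ?thesis by (simp only: 1 2)
qed



lemma subseqs_Cons': "subseqs (x#xs) = map (Cons x) (subseqs xs) @ subseqs xs"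
  by (simp add: Let_def)



definition prec :: "nat list \<Rightarrow> nat \<Rightarrow> nat \<Rightarrow> bool" where
  "prec y a b \<longleftrightarrow> (\<exists>i j. i < j \<and> j < length y \<and> y!i = a \<and> y!j = b)"

lemma prec_app1: "a \<in> set u \<Longrightarrow> b \<in> set r \<Longrightarrow> prec (u @ r) a b"
proof -
  assume "a \<in> set u" "b \<in> set r"
  then obtain i j where "i < length u" "u!i = a" "j < length r" "r!j = b"
    by (auto simp: in_set_conv_nth)
  then show ?thesis unfolding prec_def
    by (rule_tac x=i in exI, rule_tac x="length u + j" in exI) (auto simp: nth_append)
qed

lemma prec_app2: "prec r a b \<Longrightarrow> prec (u @ r) a b"
  unfolding prec_def
  by (clarify, rule_tac x="length u + i" in exI, rule_tac x="length u + j" in exI) (auto simp: nth_append)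

lemma sr_append: "stack_run T inp stk (out' @ out) = out' @ stack_run T inp stk out"
  by (induction T inp stk out rule: stack_run.induct) auto

lemma sr_out: "stack_run T inp stk out = out @ stack_run T inp stk []"
  using sr_append[of T inp stk out "[]"] by simp

lemma sr_mset: "mset (stack_run T inp stk out) = mset (out @ stk @ inp)"
  by (induction T inp stk out rule: stack_run.induct) auto

lemma sr_set: "set (stack_run T inp stk out) = set (out @ stk @ inp)"
  by (metis mset_eq_setD sr_mset)

lemma sr_prec: "c \<in> set q \<Longrightarrow> prec (stack_run T inp (p @ a # q) out) a c"
proof (induction T inp "p @ a # q" out arbitrary: p rule: stack_run.induct)
  case (1 T out)
  then show ?case using prec_app1[of a "out @ p @ [a]" c q] by simp
next
  case (2 T a inp out)
  then show ?case by simp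
next
  case (3 T a' inp b stk out)
  show ?case
  proof (cases "avoids_all T (a' # b # stk)")
    case True
    have e: "stack_run T (a' # inp) (b # stk) out = stack_run T inp (a' # b # stk) out"
      using True by simp
    have "prec (stack_run T inp (a' # b # stk) out) a c"
      using "3.hyps"(1)[OF True, of "a' # p"] "3.hyps"(3) "3.prems" by simp
    then show ?thesis using e "3.hyps"(3) by simp
  next
    case False
    show ?thesis
    proof (cases p)
      case Nil
      then have "b = a" "stk = q" using "3.hyps"(3) by auto
      have eq: "stack_run T (a' # inp) (p @ a # q) out = (out @ [a]) @ stack_run T (a' # inp) q []"
        using Nil False \<open>b = a\<close> \<open>stk = q\<close> sr_out[of T "a' # inp" q "out @ [a]"] by simp
      have "c \<in> set (stack_run T (a' # inp) q [])" using "3.prems" sr_set by auto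
      then show ?thesis unfolding eq by (intro prec_app1) auto
    next
      case (Cons p0 p')
      then have "stk = p' @ a # q" using "3.hyps"(3) by simp
      then show ?thesis using "3.hyps"(2)[OF False] "3.prems" False Cons "3.hyps"(3) by simp
    qed
  qed
qed

lemma av3_2: "avoids_all T3 [a, b]"
  by (simp add: av3 subseqs_Cons' del: subseqs.simps(2))
lemma av3_1: "avoids_all T3 [a]"
  by (simp add: av3 subseqs_Cons' del: subseqs.simps(2))

lemma sr_last: "stk \<noteq> [] \<Longrightarrow> last (stack_run T3 inp stk out) = last stk"
proof (induction T3 inp stk out rule: stack_run.induct)
  case (3 a inp b stk out)
  show ?case
  proof (cases "avoids_all T3 (a # b # stk)")
    case True
    then show ?thesis using 3 by simp
  next
    case False
    then have "stk \<noteq> []" using av3_2 by auto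
    then show ?thesis using 3 False by simp
  qed
qed auto

type_synonym state = "nat list \<times> nat list \<times> nat list"

inductive step :: "nat list set \<Rightarrow> state \<Rightarrow> state \<Rightarrow> bool" for T where
  push0: "step T (a # inp, [], out) (inp, [a], out)"
| push: "avoids_all T (a # b # stk) \<Longrightarrow> step T (a # inp, b # stk, out) (inp, a # b # stk, out)"
| pop: "\<not> avoids_all T (a # b # stk) \<Longrightarrow> step T (a # inp, b # stk, out) (a # inp, stk, out @ [b])"

definition run :: "nat list set \<Rightarrow> state \<Rightarrow> nat list" where
  "run T s = (case s of (i, k, ot) \<Rightarrow> stack_run T i k ot)"

lemma step_run: "step T s s' \<Longrightarrow> run T s = run T s'"
  by (induction rule: step.induct) (auto simp: run_def)

lemma steps_run: "(step T)\<^sup>*\<^sup>* s s' \<Longrightarrow> run T s = run T s'"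
  by (induction rule: rtranclp_induct) (auto dest: step_run)

definition ms :: "state \<Rightarrow> nat multiset" where
  "ms s = (case s of (i, k, ot) \<Rightarrow> mset (ot @ k @ i))"

lemma step_ms: "step T s s' \<Longrightarrow> ms s = ms s'"
  by (induction rule: step.induct) (auto simp: ms_def)

lemma steps_ms: "(step T)\<^sup>*\<^sup>* s s' \<Longrightarrow> ms s = ms s'"
  by (induction rule: rtranclp_induct) (auto dest: step_ms)

lemma push_one: "\<exists>stk' out'. (step T)\<^sup>*\<^sup>* (a # v, stk, out) (v, stk', out')"
proof (induction stk arbitrary: out)
  case Nil
  then show ?case using push0 by blast
next
  case (Cons b stk)
  show ?case
  proof (cases "avoids_all T (a # b # stk)")
    case True
    then show ?thesis using push by blast
  next
    case False
    then have "step T (a # v, b # stk, out) (a # v, stk, out @ [b])" by (rule pop)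
    then show ?thesis using Cons[of "out @ [b]"] by (meson converse_rtranclp_into_rtranclp)
  qed
qed

lemma steps_split: "\<exists>stk' out'. (step T)\<^sup>*\<^sup>* (u @ v, stk, out) (v, stk', out')"
proof (induction u arbitrary: stk out)
  case Nil
  then show ?case by auto
next
  case (Cons a u)
  obtain stk1 out1 where "(step T)\<^sup>*\<^sup>* (a # u @ v, stk, out) (u @ v, stk1, out1)"
    using push_one by blast
  moreover obtain stk2 out2 where "(step T)\<^sup>*\<^sup>* (u @ v, stk1, out1) (v, stk2, out2)"
    using Cons[of stk1 out1] by blast
  ultimately have "(step T)\<^sup>*\<^sup>* ((a # u) @ v, stk, out) (v, stk2, out2)"
    by simp
  then show ?case by blast
qed

definition avst :: "state \<Rightarrow> bool" where
  "avst s = (case s of (i, k, ot) \<Rightarrow> avoids_all T3 k)"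

lemma av_tail: "avoids_all T (b # w) \<Longrightarrow> avoids_all T w"
  unfolding avoids_all_def contains_def by (auto simp: Let_def)

lemma step_av: "step T3 s s' \<Longrightarrow> avst s \<Longrightarrow> avst s'"
  by (induction rule: step.induct) (auto simp: avst_def av3_1 dest: av_tail)

lemma steps_av: "(step T3)\<^sup>*\<^sup>* s s' \<Longrightarrow> avst s \<Longrightarrow> avst s'"
  by (induction rule: rtranclp_induct) (auto dest: step_av)



lemma sub_nil: "[] \<in> set (subseqs w)"
  by (induction w) (auto simp: subseqs_Cons' simp del: subseqs.simps(2))
lemma sub_cons: "u \<in> set (subseqs w) \<Longrightarrow> a # u \<in> set (subseqs (a # w))"
  by (auto simp: subseqs_Cons' simp del: subseqs.simps(2))
lemma sub_skip: "u \<in> set (subseqs w) \<Longrightarrow> u \<in> set (subseqs (a # w))"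
  by (auto simp: subseqs_Cons' simp del: subseqs.simps(2))
lemma sub_skips: "u \<in> set (subseqs w) \<Longrightarrow> u \<in> set (subseqs (p @ w))"
  by (induction p) (simp_all add: sub_skip del: subseqs.simps(2))
lemma sub_single: "b \<in> set w \<Longrightarrow> [b] \<in> set (subseqs w)"
proof -
  assume "b \<in> set w"
  then obtain p q where "w = p @ b # q" by (meson split_list)
  then show ?thesis by (auto intro!: sub_skips sub_cons sub_nil)
qed

definition W :: "nat list set" where "W = {[2,1]}"
lemma avW: "avoids_all W w \<longleftrightarrow> \<not> (\<exists>u\<in>set (subseqs w). \<exists>p q. u=[p,q] \<and> p>q)"
  unfolding W_def by (rule av21)

lemma west_pop: "b \<in> set stk \<Longrightarrow> b < c \<Longrightarrow>
  \<exists>stk' out'. stack_run W (c # w) stk out = stack_run W (c # w) stk' out' \<and> b \<in> set out'"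
proof (induction stk arbitrary: out)
  case Nil
  then show ?case by simp
next
  case (Cons d s)
  have "[b] \<in> set (subseqs (d # s))" using Cons.prems(1) by (rule sub_single)
  then have "[c, b] \<in> set (subseqs (c # d # s))" by (rule sub_cons)
  then have na: "\<not> avoids_all W (c # d # s)" using Cons.prems(2) unfolding avW by blast
  then have e: "stack_run W (c # w) (d # s) out = stack_run W (c # w) s (out @ [d])" by simp
  show ?case
  proof (cases "d = b")
    case True
    then show ?thesis using e by (intro exI[of _ s] exI[of _ "out @ [d]"]) simp
  next
    case False
    then have "b \<in> set s" using Cons.prems(1) by simp
    then show ?thesis using Cons.IH[of "out @ [d]"] Cons.prems(2) e by auto
  qed
qed

definition west_s :: "nat list \<Rightarrow> state" where "west_s y = (y, [], [])"

lemma west_231: "distinct y \<Longrightarrow> y = u @ c # w \<Longrightarrow> b \<in> set u \<Longrightarrow> a \<in> set w \<Longrightarrow> b < c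
  \<Longrightarrow> prec (west y) b a"
proof -
  assume dy: "distinct y" and y: "y = u @ c # w" and bu: "b \<in> set u" and aw: "a \<in> set w" and bc: "b < c"
  obtain stk out where st: "(step W)\<^sup>*\<^sup>* (u @ (c # w), [], []) (c # w, stk, out)"
    using steps_split by blast
  have wy: "west y = stack_run W (c # w) stk out"
    using steps_run[OF st] y unfolding west_def sT_def run_def W_def by simp
  have "ms (u @ (c # w), [], []) = ms (c # w, stk, out)" using steps_ms[OF st] .
  then have "mset (u @ c # w) = mset (out @ stk @ c # w)" by (simp add: ms_def)
  then have "set (u @ c # w) = set (out @ stk @ c # w)" by (metis mset_eq_setD)
  moreover have "b \<notin> set (c # w)" using dy y bu by auto
  ultimately have "b \<in> set out \<or> b \<in> set stk" using bu by auto
  then have "\<exists>stk' out'. west y = stack_run W (c # w) stk' out' \<and> b \<in> set out'"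
  proof
    assume "b \<in> set out" then show ?thesis using wy by blast
  next
    assume "b \<in> set stk" then show ?thesis using west_pop[of b stk c w out] bc wy by metis
  qed
  then obtain stk' out' where wy': "west y = stack_run W (c # w) stk' out'" and bo: "b \<in> set out'"
    by blast
  have "west y = out' @ stack_run W (c # w) stk' []" using wy' sr_out by metis
  moreover have "a \<in> set (stack_run W (c # w) stk' [])" using aw sr_set by auto
  ultimately show ?thesis using bo prec_app1 by metis
qed

lemma prec_dec: "distinct y \<Longrightarrow> prec y b c \<Longrightarrow> prec y c a \<Longrightarrow> \<exists>u w. y = u @ c # w \<and> b \<in> set u \<and> a \<in> set w"
proof -
  assume dy: "distinct y" and p1: "prec y b c" and p2: "prec y c a"
  obtain i j where ij: "i < j" "j < length y" "y!i = b" "y!j = c" using p1 unfolding prec_def by blast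
  obtain j' k where jk: "j' < k" "k < length y" "y!j' = c" "y!k = a" using p2 unfolding prec_def by blast
  have "j' = j" using dy ij jk nth_eq_iff_index_eq by (metis order.strict_trans)
  have "y = take j y @ y!j # drop (Suc j) y" using ij(2) by (simp add: id_take_nth_drop)
  moreover have "b \<in> set (take j y)" using ij by (auto simp: in_set_conv_nth intro!: exI[of _ i])
  moreover have "a \<in> set (drop (Suc j) y)" using jk \<open>j' = j\<close>
    by (auto simp: in_set_conv_nth intro!: exI[of _ "k - Suc j"])
  ultimately show ?thesis using ij by metis
qed

lemma prec_upt: "prec [1..<n+1] b a \<Longrightarrow> a < b \<Longrightarrow> False"
  unfolding prec_def by (auto simp del: upt_Suc)

lemma no231: "west y = [1..<n+1] \<Longrightarrow> distinct y \<Longrightarrow> prec y b c \<Longrightarrow> prec y c a \<Longrightarrow> a < b \<Longrightarrow> b < c \<Longrightarrow> False"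
  by (metis prec_dec west_231 prec_upt)



lemma sub_idx1: "k < length w \<Longrightarrow> [w!k] \<in> set (subseqs w)"
  by (simp add: sub_single)

lemma sub_idx2: "j < k \<Longrightarrow> k < length w \<Longrightarrow> [w!j, w!k] \<in> set (subseqs w)"
proof -
  assume a: "j < k" "k < length w"
  have w: "w = take j w @ w!j # drop (Suc j) w" using a by (simp add: id_take_nth_drop)
  have "[drop (Suc j) w ! (k - Suc j)] \<in> set (subseqs (drop (Suc j) w))"
    using a by (intro sub_idx1) auto
  moreover have "drop (Suc j) w ! (k - Suc j) = w ! k" using a by simp
  ultimately have "[w!j, w!k] \<in> set (subseqs (w!j # drop (Suc j) w))"
    by (metis sub_cons)
  then show ?thesis using w sub_skips by metis
qed

lemma sub_idx3: "i < j \<Longrightarrow> j < k \<Longrightarrow> k < length w \<Longrightarrow> [w!i, w!j, w!k] \<in> set (subseqs w)"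
proof -
  assume a: "i < j" "j < k" "k < length w"
  have w: "w = take i w @ w!i # drop (Suc i) w" using a by (simp add: id_take_nth_drop)
  have "[drop (Suc i) w ! (j - Suc i), drop (Suc i) w ! (k - Suc i)] \<in> set (subseqs (drop (Suc i) w))"
    using a by (intro sub_idx2) auto
  moreover have "drop (Suc i) w ! (k - Suc i) = w ! k" "drop (Suc i) w ! (j - Suc i) = w ! j" using a by simp_all
  ultimately have "[w!i, w!j, w!k] \<in> set (subseqs (w!i # drop (Suc i) w))"
    by (metis sub_cons)
  then show ?thesis using w sub_skips by metis
qed

lemma prec_last: "distinct y \<Longrightarrow> e \<in> set y \<Longrightarrow> e \<noteq> last y \<Longrightarrow> prec y e (last y)"
proof -
  assume d: "distinct y" and e: "e \<in> set y" and l: "e \<noteq> last y"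
  obtain i where i: "i < length y" "y!i = e" using e by (auto simp: in_set_conv_nth)
  have ne: "y \<noteq> []" using e by auto
  have "i \<noteq> length y - 1" using l i ne by (auto simp: last_conv_nth)
  then show ?thesis unfolding prec_def using i ne
    by (intro exI[of _ i] exI[of _ "length y - 1"]) (auto simp: last_conv_nth)
qed

definition N231 :: "nat list \<Rightarrow> bool" where
  "N231 y \<longleftrightarrow> (\<forall>a b c. prec y b c \<longrightarrow> prec y c a \<longrightarrow> a < b \<longrightarrow> b < c \<longrightarrow> False)"

lemma sr_first: "last (stack_run T3 (h # xs) [] []) = h"
  using sr_last[of "[h]" xs "[]"] by simp

lemma caseA:
  assumes x: "x = 2 # e1 # e2 # w \<or> x = 2 # 1 # e1 # e2 # w \<or> x = 2 # e1 # 1 # e2 # w"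
    and e: "2 < e1" "2 < e2" "e1 \<noteq> e2"
  shows "\<exists>b c. prec (stack_run T3 x [] []) b c \<and> 2 < b \<and> b < c"
proof (cases "e2 < e1")
  case True
  have "\<exists>q. e1 \<in> set q \<and> stack_run T3 x [] [] = stack_run T3 w (e2 # q) []"
    using x
  proof (elim disjE)
    assume "x = 2 # e1 # e2 # w" then show ?thesis using e True
      by (intro exI[of _ "[e1,2]"]) (simp add: av3 subseqs_Cons' del: subseqs.simps(2))
  next
    assume "x = 2 # 1 # e1 # e2 # w" then show ?thesis using e True
      by (intro exI[of _ "[e1,1,2]"]) (simp add: av3 subseqs_Cons' del: subseqs.simps(2))
  next
    assume "x = 2 # e1 # 1 # e2 # w" then show ?thesis using e True
      by (intro exI[of _ "[1,e1,2]"]) (simp add: av3 subseqs_Cons' del: subseqs.simps(2))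
  qed
  then obtain q where q: "e1 \<in> set q" and "stack_run T3 x [] [] = stack_run T3 w ([] @ e2 # q) []" by auto
  then have "prec (stack_run T3 x [] []) e2 e1" using sr_prec[OF q, of T3 w "[]" e2 "[]"] by simp
  then show ?thesis using e True by blast
next
  case False
  then have lt: "e1 < e2" using e by simp
  have "\<exists>q ot. e1 \<in> set ot \<and> stack_run T3 x [] [] = stack_run T3 w (e2 # q) ot"
    using x
  proof (elim disjE)
    assume "x = 2 # e1 # e2 # w" then show ?thesis using e lt
      by (intro exI[of _ "[2]"] exI[of _ "[e1]"]) (simp add: av3 subseqs_Cons' del: subseqs.simps(2))
  next
    assume "x = 2 # 1 # e1 # e2 # w" then show ?thesis using e lt
      by (intro exI[of _ "[1,2]"] exI[of _ "[e1]"]) (simp add: av3 subseqs_Cons' del: subseqs.simps(2))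
  next
    assume "x = 2 # e1 # 1 # e2 # w" then show ?thesis using e lt
      by (intro exI[of _ "[2]"] exI[of _ "[1,e1]"]) (simp add: av3 subseqs_Cons' del: subseqs.simps(2))
  qed
  then obtain q ot where o: "e1 \<in> set ot" and "stack_run T3 x [] [] = stack_run T3 w (e2 # q) ot" by auto
  then have "stack_run T3 x [] [] = ot @ stack_run T3 w (e2 # q) []" using sr_out by metis
  moreover have "e2 \<in> set (stack_run T3 w (e2 # q) [])" using sr_set by simp
  ultimately have "prec (stack_run T3 x [] []) e1 e2" using o prec_app1 by metis
  then show ?thesis using e lt by blast
qed



lemma crit: "(step T)\<^sup>*\<^sup>* s0 (inp, stk, out) \<Longrightarrow> 1 \<notin> set out \<Longrightarrow>
  (\<exists>a inp' S out'. (step T)\<^sup>*\<^sup>* s0 (a # inp', 1 # S, out') \<and> \<not> avoids_all T (a # 1 # S)) \<or>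
  (\<exists>stk' out'. (step T)\<^sup>*\<^sup>* s0 ([], stk', out') \<and> 1 \<notin> set out')"
proof (induction "2 * length inp + length stk" arbitrary: inp stk out rule: less_induct)
  case less
  show ?case
  proof (cases inp)
    case Nil
    then show ?thesis using less.prems by blast
  next
    case (Cons a inp')
    show ?thesis
    proof (cases stk)
      case Nil
      have "step T (inp, stk, out) (inp', [a], out)" using Cons Nil push0 by simp
      then have r: "(step T)\<^sup>*\<^sup>* s0 (inp', [a], out)" using less.prems(1) by simp
      show ?thesis using less.hyps[OF _ r less.prems(2)] Cons Nil by simp
    next
      case (Cons b stk')
      show ?thesis
      proof (cases "avoids_all T (a # b # stk')")
        case True
        have "step T (inp, stk, out) (inp', a # b # stk', out)" using Cons \<open>inp = a # inp'\<close> push[OF True] by simp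
        then have r: "(step T)\<^sup>*\<^sup>* s0 (inp', a # b # stk', out)" using less.prems(1) by simp
        show ?thesis using less.hyps[OF _ r less.prems(2)] Cons \<open>inp = a # inp'\<close> by simp
      next
        case False
        show ?thesis
        proof (cases "b = 1")
          case True
          then show ?thesis using False less.prems(1) Cons \<open>inp = a # inp'\<close> by blast
        next
          case b1: False
          have "step T (inp, stk, out) (inp, stk', out @ [b])" using Cons \<open>inp = a # inp'\<close> pop[OF False] by simp
          then have r: "(step T)\<^sup>*\<^sup>* s0 (inp, stk', out @ [b])" using less.prems(1) by simp
          have "1 \<notin> set (out @ [b])" using less.prems(2) b1 by simp
          then show ?thesis using less.hyps[OF _ r] Cons by simp
        qed
      qed
    qed
  qed
qed

lemma av_nil: "avoids_all T3 []"
  by (simp add: av3)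

lemma state_facts:
  assumes st: "(step T3)\<^sup>*\<^sup>* (x, [], []) (inp, stk, out)" and px: "is_perm n x"
  shows "avoids_all T3 stk" "distinct (out @ stk @ inp)" "set (out @ stk @ inp) = {1..n}"
proof -
  show "avoids_all T3 stk" using steps_av[OF st] by (simp add: avst_def av_nil)
  have m: "mset (out @ stk @ inp) = mset x" using steps_ms[OF st] by (simp add: ms_def)
  show "distinct (out @ stk @ inp)" using m px unfolding is_perm_def by (metis mset_eq_imp_distinct_iff)
  show "set (out @ stk @ inp) = {1..n}" using m px unfolding is_perm_def by (metis mset_eq_setD)
qed

lemma caseB:
  assumes st: "(step T3)\<^sup>*\<^sup>* (x, [], []) (a # inp, 1 # S, out)" and na: "\<not> avoids_all T3 (a # 1 # S)"
    and px: "is_perm n x" and N: "N231 (stack_run T3 x [] [])"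
  shows False
proof -
  note f = state_facts[OF st px]
  have av: "avoids_all T3 (1 # S)" using f(1) .
  have a0: "a \<in> {1..n}" using f(3) by (metis Un_iff list.set_intros(1) set_append)
  have "a \<noteq> 1" using f(2) by auto
  then have a1: "a > 1" using a0 by simp
  have S1: "\<forall>s\<in>set S. s > 1"
  proof
    fix s assume s: "s \<in> set S"
    then have "s \<in> {1..n}" using f(3) by auto
    moreover have "s \<noteq> 1" using f(2) s by auto
    ultimately show "s > 1" by simp
  qed
  have aS: "a \<notin> set S" using f(2) by auto
  have dS: "distinct S" using f(2) by auto
  have y: "stack_run T3 x [] [] = stack_run T3 (a # inp) (1 # S) out"
    using steps_run[OF st] by (simp add: run_def)
  consider "S = []" | s where "S = [s]" | s t where "S = [s, t]" | s t u R where "S = s # t # u # R"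
    by (metis list.exhaust)
  then show False
  proof cases
    case 1
    then show False using na av3_2 by simp
  next
    case 2
    then show False using na a1 S1 by (simp add: av3 subseqs_Cons' del: subseqs.simps(2))
  next
    case (3 s t)
    have s1: "s > 1" "t > 1" using S1 3 by auto
    have st': "s \<noteq> t" "a \<noteq> s" "a \<noteq> t" using dS aS 3 by auto
    have "s > t" using av 3 s1 st' by (simp add: av3 subseqs_Cons' del: subseqs.simps(2))
    have "a > s"
    proof (rule ccontr)
      assume "\<not> a > s"
      then have "a < s" using st' by simp
      then have "avoids_all T3 (a # 1 # S)" using 3 \<open>s > t\<close> s1 a1
        by (simp add: av3 subseqs_Cons' del: subseqs.simps(2))
      then show False using na by simp
    qed
    have y2: "stack_run T3 x [] [] = stack_run T3 inp ([] @ a # [t]) (out @ [1, s])"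
      using y 3 \<open>a > s\<close> \<open>s > t\<close> s1 a1 by (simp add: av3 subseqs_Cons' del: subseqs.simps(2))
    have p1: "prec (stack_run T3 x [] []) a t" unfolding y2 by (rule sr_prec) simp
    have "stack_run T3 x [] [] = (out @ [1, s]) @ stack_run T3 inp [a, t] []"
      using y2 sr_out by (metis append_Nil)
    moreover have "a \<in> set (stack_run T3 inp [a, t] [])" using sr_set by simp
    ultimately have p2: "prec (stack_run T3 x [] []) s a" using prec_app1[of s "out @ [1, s]" a] by simp
    show False using N p1 p2 \<open>a > s\<close> \<open>s > t\<close> unfolding N231_def by blast
  next
    case (4 s t u R)
    have s1: "s > 1" "t > 1" "u > 1" using S1 4 by auto
    have d: "s \<noteq> t" "t \<noteq> u" using dS 4 by auto
    let ?w = "1 # s # t # u # R"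
    have "avoids_all T3 ?w" using av 4 by simp
    then have A: "\<not> (\<exists>v\<in>set (subseqs ?w). \<exists>p q r. v=[p,q,r] \<and> p<q \<and> q<r) \<and>
      \<not> (\<exists>v\<in>set (subseqs ?w). \<exists>p q r. v=[p,q,r] \<and> p>q \<and> q>r)" unfolding av3 .
    have m1: "[1, s, t] \<in> set (subseqs ?w)" using sub_idx3[of 0 1 2 ?w] by simp
    have "\<not> (1 < s \<and> s < t)" using A m1 by blast
    then have "s > t" using s1 d by auto
    have m2: "[1, t, u] \<in> set (subseqs ?w)" using sub_idx3[of 0 2 3 ?w] by simp
    have "\<not> (1 < t \<and> t < u)" using A m2 by blast
    then have "t > u" using s1 d by auto
    have m3: "[s, t, u] \<in> set (subseqs ?w)" using sub_idx3[of 1 2 3 ?w] by simp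
    have "\<not> (s > t \<and> t > u)" using A m3 by blast
    then show False using \<open>s > t\<close> \<open>t > u\<close> by simp
  qed
qed



lemma caseA0:
  assumes st: "(step T3)\<^sup>*\<^sup>* (x, [], []) ([], stk, out)" and o1: "1 \<notin> set out"
    and px: "is_perm n x" and p12: "prec (stack_run T3 x [] []) 1 2"
  shows "last (stack_run T3 x [] []) = 2"
proof -
  note f = state_facts[OF st px]
  have y: "stack_run T3 x [] [] = out @ stk"
    using steps_run[OF st] by (simp add: run_def)
  obtain i j where ij: "i < j" "j < length (out @ stk)" "(out @ stk)!i = 1" "(out @ stk)!j = 2"
    using p12 unfolding y prec_def by blast
  have "\<not> i < length out"
  proof
    assume "i < length out"
    then have "out ! i = 1" using ij by (simp add: nth_append)
    then show False using o1 \<open>i < length out\<close> nth_mem by metis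
  qed
  then have i1: "stk ! (i - length out) = 1" and j2: "stk ! (j - length out) = 2"
    and jl: "j - length out < length stk" and ijs: "i - length out < j - length out"
    using ij by (auto simp: nth_append)
  have ds: "distinct stk" using f(2) by simp
  have "j - length out = length stk - 1"
  proof (rule ccontr)
    assume ne: "j - length out \<noteq> length stk - 1"
    let ?k = "length stk - 1"
    have jk: "j - length out < ?k" using ne jl by simp
    have kl: "?k < length stk" using jl by simp
    have "stk ! ?k \<in> set stk" using kl by simp
    then have d1: "stk ! ?k \<in> {1..n}" using f(3) by auto
    have "stk ! ?k \<noteq> 1" using ds i1 ijs jk kl nth_eq_iff_index_eq
      by (metis order.strict_trans less_imp_neq)
    moreover have "stk ! ?k \<noteq> 2" using ds j2 jk kl jl nth_eq_iff_index_eq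
      by (metis less_imp_neq)
    ultimately have d2: "stk ! ?k > 2" using d1 by auto
    have "[stk ! (i - length out), stk ! (j - length out), stk ! ?k] \<in> set (subseqs stk)"
      using ijs jk kl by (rule sub_idx3)
    then have "[1, 2, stk ! ?k] \<in> set (subseqs stk)" using i1 j2 by simp
    moreover have "\<not> (\<exists>v\<in>set (subseqs stk). \<exists>p q r. v=[p,q,r] \<and> p<q \<and> q<r)"
      using f(1) unfolding av3 by blast
    ultimately have "\<not> (1 < (2::nat) \<and> 2 < stk ! ?k)" by blast
    then show False using d2 by simp
  qed
  moreover have "stk \<noteq> []" using jl by auto
  ultimately have "last stk = 2" using j2 by (simp add: last_conv_nth)
  moreover have "stk \<noteq> []" using jl by auto
  ultimately show ?thesis using y by simp
qed

lemma main_contra: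
  assumes px: "is_perm n x" and n5: "n \<ge> 5" and N: "N231 (stack_run T3 x [] [])"
    and p12: "prec (stack_run T3 x [] []) 1 2"
  shows False
proof -
  have "(step T3)\<^sup>*\<^sup>* (x, [], []) (x, [], [])" by simp
  from crit[OF this] have
    "(\<exists>a inp' S out'. (step T3)\<^sup>*\<^sup>* (x, [], []) (a # inp', 1 # S, out') \<and> \<not> avoids_all T3 (a # 1 # S)) \<or>
     (\<exists>stk' out'. (step T3)\<^sup>*\<^sup>* (x, [], []) ([], stk', out') \<and> 1 \<notin> set out')" by simp
  then show False
  proof
    assume "\<exists>a inp' S out'. (step T3)\<^sup>*\<^sup>* (x, [], []) (a # inp', 1 # S, out') \<and> \<not> avoids_all T3 (a # 1 # S)"
    then show False using caseB px N by blast
  next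
    assume "\<exists>stk' out'. (step T3)\<^sup>*\<^sup>* (x, [], []) ([], stk', out') \<and> 1 \<notin> set out'"
    then have l2: "last (stack_run T3 x [] []) = 2" using caseA0 px p12 by blast
    have dx: "distinct x" and sx: "set x = {1..n}" using px unfolding is_perm_def by auto
    have "length x = card (set x)" using dx by (simp add: distinct_card)
    then have lx: "length x = n" using sx by simp
    obtain h rest where x: "x = h # rest" using lx n5 by (cases x) auto
    have h2: "h = 2" using l2 sr_first x by simp
    have lr: "length rest \<ge> 4" using lx n5 x by simp
    obtain r0 rest1 where "rest = r0 # rest1" using lr by (cases rest) auto
    moreover obtain r1 rest2 where "rest1 = r1 # rest2" using lr \<open>rest = r0 # rest1\<close> by (cases rest1) auto
    moreover obtain r2 w where "rest2 = r2 # w" using lr \<open>rest = r0 # rest1\<close> \<open>rest1 = r1 # rest2\<close> by (cases rest2) auto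
    ultimately have rest: "rest = r0 # r1 # r2 # w" by simp
    have dr: "distinct (2 # r0 # r1 # r2 # w)" using dx x h2 rest by simp
    have rin: "r0 \<in> {1..n}" "r1 \<in> {1..n}" "r2 \<in> {1..n}" using sx x rest by auto
    have "\<exists>e1 e2 w'. (x = 2 # e1 # e2 # w' \<or> x = 2 # 1 # e1 # e2 # w' \<or> x = 2 # e1 # 1 # e2 # w')
                    \<and> 2 < e1 \<and> 2 < e2 \<and> e1 \<noteq> e2"
    proof (cases "r0 = 1")
      case True
      then show ?thesis using x h2 rest dr rin
        by (intro exI[of _ r1] exI[of _ r2] exI[of _ w]) auto
    next
      case r0: False
      show ?thesis
      proof (cases "r1 = 1")
        case True
        then show ?thesis using x h2 rest dr rin r0
          by (intro exI[of _ r0] exI[of _ r2] exI[of _ w]) auto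
      next
        case False
        then show ?thesis using x h2 rest dr rin r0
          by (intro exI[of _ r0] exI[of _ r1] exI[of _ "r2 # w"]) auto
      qed
    qed
    then obtain e1 e2 w' where
      "(x = 2 # e1 # e2 # w' \<or> x = 2 # 1 # e1 # e2 # w' \<or> x = 2 # e1 # 1 # e2 # w')"
      "2 < e1" "2 < e2" "e1 \<noteq> e2" by blast
    from caseA[OF this] obtain b c where bc: "prec (stack_run T3 x [] []) b c" "2 < b" "b < c" by blast
    have dy: "distinct (stack_run T3 x [] [])"
      using dx sr_mset[of T3 x "[]" "[]"] by (metis append_Nil append_Nil2 mset_eq_imp_distinct_iff)
    have cy: "c \<in> set (stack_run T3 x [] [])" using bc(1) unfolding prec_def by auto
    have "prec (stack_run T3 x [] []) c 2" using prec_last[OF dy cy] l2 bc by simp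
    then show False using N bc unfolding N231_def by (metis less_trans)
  qed
qed



theorem lemma4p5:
  fixes n :: nat and x :: "nat list"
  assumes "n \<ge> 5" and "x \<in> Sort n [1,2,3] [3,2,1]"
  shows "ind (s2 [1,2,3] [3,2,1] x) 2 + 1 = ind (s2 [1,2,3] [3,2,1] x) 1"
proof -
  have px: "is_perm n x" and wy: "west (s2 [1,2,3] [3,2,1] x) = [1..<n+1]"
    using assms(2) unfolding Sort_def by auto
  have ys: "s2 [1,2,3] [3,2,1] x = stack_run T3 x [] []" unfolding s2_def sT_def T3_def by simp
  define y where "y = stack_run T3 x [] []"
  have wy': "west y = [1..<n+1]" using wy ys y_def by simp
  have dx: "distinct x" and sx: "set x = {1..n}" using px unfolding is_perm_def by auto
  have dy: "distinct y" unfolding y_def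
    using dx sr_mset[of T3 x "[]" "[]"] by (metis append_Nil append_Nil2 mset_eq_imp_distinct_iff)
  have sy: "set y = {1..n}" unfolding y_def using sx sr_set[of T3 x "[]" "[]"] by simp
  have N: "N231 y" unfolding N231_def using no231[OF wy' dy] by blast
  have "1 \<in> set y" "2 \<in> set y" using sy assms(1) by auto
  then obtain i1 i2 where i1: "i1 < length y" "y!i1 = 1" and i2: "i2 < length y" "y!i2 = 2"
    by (meson in_set_conv_nth)
  have ind1: "ind y 1 = i1" unfolding ind_def
  proof (rule the_equality)
    show "i1 < length y \<and> y!i1 = 1" using i1 by simp
    fix i assume "i < length y \<and> y!i = 1" then show "i = i1" using dy i1 nth_eq_iff_index_eq by metis
  qed
  have ind2: "ind y 2 = i2" unfolding ind_def
  proof (rule the_equality)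
    show "i2 < length y \<and> y!i2 = 2" using i2 by simp
    fix i assume "i < length y \<and> y!i = 2" then show "i = i2" using dy i2 nth_eq_iff_index_eq by metis
  qed
  have "i1 \<noteq> i2" using i1 i2 by auto
  then consider "i1 < i2" | "i2 < i1" by linarith
  then have "i2 + 1 = i1"
  proof cases
    case 1
    then have "prec (stack_run T3 x [] []) 1 2" unfolding prec_def y_def[symmetric] using i1 i2 by blast
    then show ?thesis using main_contra[OF px assms(1)] N y_def by blast
  next
    case 2
    show ?thesis
    proof (rule ccontr)
      assume "i2 + 1 \<noteq> i1"
      let ?k = "i1 - 1"
      have k: "i2 < ?k" "?k < i1" using 2 \<open>i2 + 1 \<noteq> i1\<close> by auto
      have kl: "?k < length y" using k i1 by simp
      have "y ! ?k \<in> {1..n}" using sy kl nth_mem by blast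
      moreover have "y ! ?k \<noteq> 1" using dy i1 k kl nth_eq_iff_index_eq by (metis less_imp_neq)
      moreover have "y ! ?k \<noteq> 2" using dy i2 k kl nth_eq_iff_index_eq by (metis less_imp_neq)
      ultimately have c: "y ! ?k > 2" by auto
      have "prec y 2 (y ! ?k)" unfolding prec_def using k kl i2 by blast
      moreover have "prec y (y ! ?k) 1" unfolding prec_def using k i1 by blast
      ultimately show False using N c unfolding N231_def by (metis one_less_numeral_iff semiring_norm(76))
    qed
  qed
  then show ?thesis using ys y_def ind1 ind2 by simp
qed


end
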